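(* Let $G$ be a connected graph of order $n\geq 3$. If $\operatorname{diam}(G)=2$, then $prc(G)=\chi'(G)$.
   Context: A path in an edge-coloured graph is a rainbow path if its edges receive pairwise distinct colours. The proper rainbow connection number $prc(G)$ of a nontrivial connected graph is the minimum number of colours in a proper edge-colouring (adjacent edges get distinct colours) such that every two distinct vertices are joined by a rainbow path. $\chi'(G)$ is the chromatic index of $G$. *)

theory Defs
  imports Main
begin

definition simple_graph :: "'a set \<Rightarrow> 'a set set \<Rightarrow> bool" where
  "simple_graph V E \<longleftrightarrow> finite V \<and>
     (\<forall>e\<in>E. \<exists>u v. u \<noteq> v \<and> u \<in> V \<and> v \<in> V \<and> e = {u, v})"

definition path_edges :: "'a list \<Rightarrow> 'a set list" where
  "path_edges xs = map (\<lambda>i. {xs ! i, xs ! Suc i}) [0..<length xs - 1]"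

definition is_path :: "'a set \<Rightarrow> 'a set set \<Rightarrow> 'a \<Rightarrow> 'a \<Rightarrow> 'a list \<Rightarrow> bool" where
  "is_path V E u v xs \<longleftrightarrow> xs \<noteq> [] \<and> hd xs = u \<and> last xs = v \<and> distinct xs \<and>
     set xs \<subseteq> V \<and> set (path_edges xs) \<subseteq> E"

definition connected_graph :: "'a set \<Rightarrow> 'a set set \<Rightarrow> bool" where
  "connected_graph V E \<longleftrightarrow> (\<forall>u\<in>V. \<forall>v\<in>V. \<exists>xs. is_path V E u v xs)"

definition graph_dist :: "'a set \<Rightarrow> 'a set set \<Rightarrow> 'a \<Rightarrow> 'a \<Rightarrow> nat" where
  "graph_dist V E u v = (LEAST k. \<exists>xs. is_path V E u v xs \<and> length xs = Suc k)"

definition diam :: "'a set \<Rightarrow> 'a set set \<Rightarrow> nat" where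
  "diam V E = Max {graph_dist V E u v | u v. u \<in> V \<and> v \<in> V}"

definition proper_edge_colouring :: "'a set set \<Rightarrow> ('a set \<Rightarrow> nat) \<Rightarrow> nat \<Rightarrow> bool" where
  "proper_edge_colouring E c k \<longleftrightarrow> c ` E \<subseteq> {..<k} \<and>
     (\<forall>e1\<in>E. \<forall>e2\<in>E. e1 \<noteq> e2 \<and> e1 \<inter> e2 \<noteq> {} \<longrightarrow> c e1 \<noteq> c e2)"

definition chromatic_index :: "'a set \<Rightarrow> 'a set set \<Rightarrow> nat" where
  "chromatic_index V E = (LEAST k. \<exists>c. proper_edge_colouring E c k)"

definition rainbow_path :: "'a set \<Rightarrow> 'a set set \<Rightarrow> ('a set \<Rightarrow> nat) \<Rightarrow> 'a \<Rightarrow> 'a \<Rightarrow> 'a list \<Rightarrow> bool" where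
  "rainbow_path V E c u v xs \<longleftrightarrow> is_path V E u v xs \<and> distinct (map c (path_edges xs))"

definition proper_rainbow_connection :: "'a set \<Rightarrow> 'a set set \<Rightarrow> nat" where
  "proper_rainbow_connection V E = (LEAST k. \<exists>c. proper_edge_colouring E c k \<and>
     (\<forall>u\<in>V. \<forall>v\<in>V. u \<noteq> v \<longrightarrow> (\<exists>xs. rainbow_path V E c u v xs)))"

end

theory Submission
  imports Defs
begin

lemma rainbow_ex:
  assumes "simple_graph V E" and "connected_graph V E" and "diam V E = 2"
    and "proper_edge_colouring E c k" and "u \<in> V" "v \<in> V" "u \<noteq> v"
  shows "\<exists>xs. rainbow_path V E c u v xs"
proof -
  have fin: "finite V" using assms(1) by (simp add: simple_graph_def)
  have "finite {graph_dist V E u v | u v. u \<in> V \<and> v \<in> V}"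
  proof -
    have "{graph_dist V E u v | u v. u \<in> V \<and> v \<in> V} = (\<lambda>(a,b). graph_dist V E a b) ` (V \<times> V)"
      by auto
    then show ?thesis using fin by simp
  qed
  moreover have "graph_dist V E u v \<in> {graph_dist V E u v | u v. u \<in> V \<and> v \<in> V}"
    using assms(5,6) by blast
  ultimately have "graph_dist V E u v \<le> Max {graph_dist V E u v | u v. u \<in> V \<and> v \<in> V}"
    by (rule Max_ge)
  hence "graph_dist V E u v \<le> 2" using assms(3) unfolding diam_def by simp
  obtain ys where ys: "is_path V E u v ys"
    using assms(2,5,6) unfolding connected_graph_def by blast
  have ysne: "ys \<noteq> []" using ys unfolding is_path_def by blast
  hence "length ys = Suc (length ys - 1)" by simp
  hence "\<exists>xs. is_path V E u v xs \<and> length xs = Suc (length ys - 1)"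
    using ys by blast
  hence ex: "\<exists>xs. is_path V E u v xs \<and> length xs = Suc (graph_dist V E u v)"
    unfolding graph_dist_def by (rule LeastI)
  then obtain xs where xs0: "is_path V E u v xs" "length xs = Suc (graph_dist V E u v)"
    by blast
  have xs: "is_path V E u v xs" "length xs \<le> 3"
    using xs0 \<open>graph_dist V E u v \<le> 2\<close> by simp_all
  have "length xs \<ge> 2"
  proof (rule ccontr)
    assume "\<not> ?thesis"
    hence "length xs \<le> 1" by simp
    moreover have "xs \<noteq> []" using xs(1) unfolding is_path_def by simp
    ultimately obtain a where "xs = [a]"
      by (cases xs) auto
    then show False using xs(1) assms(7) unfolding is_path_def by auto
  qed
  then consider "length xs = 2" | "length xs = 3" using xs(2) by linarith
  then show ?thesis
  proof cases
    case 1
    have "path_edges xs = [{xs!0, xs!1}]" using 1 unfolding path_edges_def by simp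
    then show ?thesis using xs(1) unfolding rainbow_path_def by auto
  next
    case 2
    then obtain a b d where xsd: "xs = [a,b,d]"
      by (cases xs; cases "tl xs"; cases "tl (tl xs)") auto
    have pe: "path_edges xs = [{a,b},{b,d}]" using xsd unfolding path_edges_def
      by (simp add: upt_rec)
    have "a \<noteq> b" "b \<noteq> d" "a \<noteq> d" using xs(1) xsd unfolding is_path_def by auto
    hence ne: "{a,b} \<noteq> {b,d}" by (auto simp: doubleton_eq_iff)
    have "{a,b} \<in> E" "{b,d} \<in> E" using xs(1) pe unfolding is_path_def by auto
    moreover have "{a,b} \<inter> {b,d} \<noteq> {}" by auto
    ultimately have "c {a,b} \<noteq> c {b,d}" using ne assms(4) unfolding proper_edge_colouring_def
      by (metis (no_types, lifting))
    then show ?thesis using xs(1) pe unfolding rainbow_path_def by auto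
  qed
qed

theorem proposition5p1:
  fixes V :: "'a set" and E :: "'a set set"
  assumes "simple_graph V E"
    and "connected_graph V E"
    and "card V \<ge> 3"
    and "diam V E = 2"
  shows "proper_rainbow_connection V E = chromatic_index V E"
proof -
  have "\<And>k. (\<exists>c. proper_edge_colouring E c k \<and>
     (\<forall>u\<in>V. \<forall>v\<in>V. u \<noteq> v \<longrightarrow> (\<exists>xs. rainbow_path V E c u v xs))) = (\<exists>c. proper_edge_colouring E c k)"
    using rainbow_ex[OF assms(1,2,4)] by blast
  then show ?thesis unfolding proper_rainbow_connection_def chromatic_index_def by simp
qed

end
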